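(* Let $T$ be a continuous Archimedean $t$-norm and $A$ a fuzzy interval in $\mathbb R$. For $n\ge1$ let $A_n=Ave_*(A,\dots,A)$ ($n$ arguments), i.e. $A_n(z)=\sup\{T(A(x_1),\dots,A(x_n)) : \frac1n\sum_{j=1}^n x_j=z\}$. Then $(A_n)_{n\ge1}$ converges levelwise to the crisp fuzzy set $\mathbf 1_{\mathbb M A}$, i.e. for every $\alpha\in(0,1]$, $A_n^\alpha\to\mathbb M A$ in the Hausdorff metric.
   Context: A $t$-norm is a commutative, associative map $T:[0,1]^2\to[0,1]$, non-decreasing in each variable, with neutral element $1$, extended to finitely many arguments by associativity. A continuous $t$-norm is Archimedean if for all $x,y\in(0,1)$ there is $n$ with $T(x,\dots,x)$ ($n$ arguments) $<y$. A fuzzy interval in $\mathbb R$ is a map $A:\mathbb R\to[0,1]$ attaining $1$ whose $\alpha$-cuts $A^\alpha=\{A\ge\alpha\}$, $\alpha\in(0,1]$, are nonempty compact intervals; $\mathbb M A=A^1$. Levelwise convergence means convergence of every $\alpha$-cut, $\alpha\in(0,1]$, in the Hausdorff metric on nonempty compact subsets of $\mathbb R$. *)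

theory Defs
  imports "HOL-Analysis.Analysis"
begin

text \<open>t-norms on [0,1], represented as real functions of two variables;
  only their values on [0,1]^2 matter.\<close>
definition tnorm :: "(real \<Rightarrow> real \<Rightarrow> real) \<Rightarrow> bool" where
  "tnorm T \<longleftrightarrow>
     (\<forall>x\<in>{0..1}. \<forall>y\<in>{0..1}. T x y \<in> {0..1}) \<and>
     (\<forall>x\<in>{0..1}. \<forall>y\<in>{0..1}. T x y = T y x) \<and>
     (\<forall>x\<in>{0..1}. \<forall>y\<in>{0..1}. \<forall>z\<in>{0..1}. T (T x y) z = T x (T y z)) \<and>
     (\<forall>x\<in>{0..1}. \<forall>x'\<in>{0..1}. \<forall>y\<in>{0..1}. x \<le> x' \<longrightarrow> T x y \<le> T x' y) \<and>
     (\<forall>x\<in>{0..1}. T x 1 = x)"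

fun tnorm_n :: "(real \<Rightarrow> real \<Rightarrow> real) \<Rightarrow> nat \<Rightarrow> (nat \<Rightarrow> real) \<Rightarrow> real" where
  "tnorm_n T 0 a = 1"
| "tnorm_n T (Suc n) a = T (tnorm_n T n a) (a n)"

definition continuous_tnorm :: "(real \<Rightarrow> real \<Rightarrow> real) \<Rightarrow> bool" where
  "continuous_tnorm T \<longleftrightarrow> tnorm T \<and>
     continuous_on ({0..1} \<times> {0..1}) (\<lambda>(x, y). T x y)"

definition archimedean_tnorm :: "(real \<Rightarrow> real \<Rightarrow> real) \<Rightarrow> bool" where
  "archimedean_tnorm T \<longleftrightarrow> continuous_tnorm T \<and>
     (\<forall>x\<in>{0<..<1}. \<forall>y\<in>{0<..<1}. \<exists>n. tnorm_n T n (\<lambda>_. x) < y)"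

definition alpha_cut :: "(real \<Rightarrow> real) \<Rightarrow> real \<Rightarrow> real set" where
  "alpha_cut A \<alpha> = {x. A x \<ge> \<alpha>}"

definition fuzzy_interval :: "(real \<Rightarrow> real) \<Rightarrow> bool" where
  "fuzzy_interval A \<longleftrightarrow>
     (\<forall>x. A x \<in> {0..1}) \<and> (\<exists>x. A x = 1) \<and>
     (\<forall>\<alpha>\<in>{0<..1}. alpha_cut A \<alpha> \<noteq> {} \<and> compact (alpha_cut A \<alpha>)
                      \<and> is_interval (alpha_cut A \<alpha>))"

definition core :: "(real \<Rightarrow> real) \<Rightarrow> real set" where
  "core A = alpha_cut A 1"

definition ave_n :: "(real \<Rightarrow> real \<Rightarrow> real) \<Rightarrow> (real \<Rightarrow> real) \<Rightarrow> nat \<Rightarrow> real \<Rightarrow> real" where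
  "ave_n T A n z = Sup {tnorm_n T n (\<lambda>j. A (x j)) | x :: nat \<Rightarrow> real.
                          (\<Sum>j<n. x j) / real n = z}"

definition hausdorff_dist :: "real set \<Rightarrow> real set \<Rightarrow> real" where
  "hausdorff_dist S U = max (SUP x\<in>S. infdist x U) (SUP y\<in>U. infdist y S)"

end

theory Submission
  imports Defs
begin

lemma tn_basic:
  assumes "tnorm T" "x \<in> {0..1}" "y \<in> {0..1}"
  shows "0 \<le> T x y" "T x y \<le> 1" "T x y \<le> y" "T x y \<le> x"
proof -
  have r: "\<And>x y. x \<in> {0..1} \<Longrightarrow> y \<in> {0..1} \<Longrightarrow> T x y \<in> {0..1}"
   and c: "\<And>x y. x \<in> {0..1} \<Longrightarrow> y \<in> {0..1} \<Longrightarrow> T x y = T y x"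
   and m: "\<And>x x' y. x \<in> {0..1} \<Longrightarrow> x' \<in> {0..1} \<Longrightarrow> y \<in> {0..1} \<Longrightarrow> x \<le> x' \<Longrightarrow> T x y \<le> T x' y"
   and o: "\<And>x. x \<in> {0..1} \<Longrightarrow> T x 1 = x"
    using assms(1) unfolding tnorm_def by auto
  show "0 \<le> T x y" "T x y \<le> 1" using r assms by auto
  have "T x y \<le> T 1 y" using m[of x 1 y] assms by auto
  also have "\<dots> = y" using c[of 1 y] o[of y] assms by auto
  finally show "T x y \<le> y" .
  have "T x y = T y x" using c assms by auto
  also have "\<dots> \<le> T 1 x" using m[of y 1 x] assms by auto
  also have "\<dots> = x" using c[of 1 x] o[of x] assms by auto
  finally show "T x y \<le> x" .
qed

lemma tn_mono:
  assumes "tnorm T" "x \<in> {0..1}" "y \<in> {0..1}" "x' \<in> {0..1}" "y' \<in> {0..1}" "x \<le> x'" "y \<le> y'"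
  shows "T x y \<le> T x' y'"
proof -
  have c: "\<And>x y. x \<in> {0..1} \<Longrightarrow> y \<in> {0..1} \<Longrightarrow> T x y = T y x"
   and m: "\<And>x x' y. x \<in> {0..1} \<Longrightarrow> x' \<in> {0..1} \<Longrightarrow> y \<in> {0..1} \<Longrightarrow> x \<le> x' \<Longrightarrow> T x y \<le> T x' y"
    using assms(1) unfolding tnorm_def by auto
  have "T x y \<le> T x' y" using m assms by auto
  also have "\<dots> = T y x'" using c assms by auto
  also have "\<dots> \<le> T y' x'" using m assms by auto
  also have "\<dots> = T x' y'" using c assms by auto
  finally show ?thesis .
qed

lemma tn_one: "tnorm T \<Longrightarrow> T 1 1 = 1"
  unfolding tnorm_def by auto

lemma tnn_range:
  assumes "tnorm T" "\<forall>j<n. a j \<in> {0..1}"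
  shows "tnorm_n T n a \<in> {0..1}"
  using assms(2)
proof (induction n)
  case 0 then show ?case by simp
next
  case (Suc n)
  then have "tnorm_n T n a \<in> {0..1}" "a n \<in> {0..1}" by auto
  then show ?case using tn_basic[OF assms(1)] by auto
qed

lemma tnn_le:
  assumes "tnorm T" "\<forall>j<n. a j \<in> {0..1}" "j < n"
  shows "tnorm_n T n a \<le> a j"
  using assms(2,3)
proof (induction n)
  case 0 then show ?case by simp
next
  case (Suc n)
  then have h: "tnorm_n T n a \<in> {0..1}" "a n \<in> {0..1}" using tnn_range[OF assms(1)] by auto
  show ?case
  proof (cases "j = n")
    case True then show ?thesis using tn_basic[OF assms(1) h] by simp
  next
    case False
    then have "tnorm_n T n a \<le> a j" using Suc by auto
    then show ?thesis using tn_basic[OF assms(1) h] by simp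
  qed
qed

lemma tnn_mono:
  assumes "tnorm T" "\<forall>j<n. a j \<in> {0..1}" "\<forall>j<n. b j \<in> {0..1}" "\<forall>j<n. a j \<le> b j"
  shows "tnorm_n T n a \<le> tnorm_n T n b"
  using assms(2-4)
proof (induction n)
  case 0 then show ?case by simp
next
  case (Suc n)
  then have "tnorm_n T n a \<le> tnorm_n T n b" by auto
  moreover have "tnorm_n T n a \<in> {0..1}" "tnorm_n T n b \<in> {0..1}"
    using tnn_range[OF assms(1)] Suc.prems by auto
  ultimately show ?case using tn_mono[OF assms(1)] Suc.prems by simp
qed

lemma tnn_cong: "\<forall>j<n. a j = b j \<Longrightarrow> tnorm_n T n a = tnorm_n T n b"
  by (induction n) auto

lemma tnn_one: "tnorm T \<Longrightarrow> tnorm_n T n (\<lambda>_. 1) = 1"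
  by (induction n) (auto simp: tn_one)

lemma tnn_const_dec:
  assumes "tnorm T" "g \<in> {0..1}" "m \<le> k"
  shows "tnorm_n T k (\<lambda>_. g) \<le> tnorm_n T m (\<lambda>_. g)"
  using assms(3)
proof (induction k)
  case 0 then show ?case by simp
next
  case (Suc k)
  have r: "tnorm_n T k (\<lambda>_. g) \<in> {0..1}" using tnn_range[OF assms(1)] assms(2) by auto
  show ?case
  proof (cases "m = Suc k")
    case True then show ?thesis by simp
  next
    case False
    then have "tnorm_n T k (\<lambda>_. g) \<le> tnorm_n T m (\<lambda>_. g)" using Suc by auto
    then show ?thesis using tn_basic[OF assms(1) r assms(2)] by simp
  qed
qed

lemma tnn_count:
  assumes "tnorm T" "\<forall>j<n. a j \<in> {0..1}" "g \<in> {0..1}"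
  shows "tnorm_n T n a \<le> tnorm_n T (card {j. j < n \<and> a j \<le> g}) (\<lambda>_. g)"
  using assms(2)
proof (induction n)
  case 0 then show ?case by simp
next
  case (Suc n)
  let ?K = "{j. j < n \<and> a j \<le> g}"
  have IH: "tnorm_n T n a \<le> tnorm_n T (card ?K) (\<lambda>_. g)" using Suc by auto
  have h: "tnorm_n T n a \<in> {0..1}" "a n \<in> {0..1}" using tnn_range[OF assms(1)] Suc.prems by auto
  have h2: "tnorm_n T (card ?K) (\<lambda>_. g) \<in> {0..1}" using tnn_range[OF assms(1)] assms(3) by auto
  show ?case
  proof (cases "a n \<le> g")
    case True
    have "{j. j < Suc n \<and> a j \<le> g} = insert n ?K" using True by auto
    then have cK: "card {j. j < Suc n \<and> a j \<le> g} = Suc (card ?K)" by simp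
    have "tnorm_n T (Suc n) a = T (tnorm_n T n a) (a n)" by simp
    also have "\<dots> \<le> T (tnorm_n T (card ?K) (\<lambda>_. g)) g"
      using tn_mono[OF assms(1) h h2 assms(3) IH True] .
    finally show ?thesis using cK by simp
  next
    case False
    have "{j. j < Suc n \<and> a j \<le> g} = ?K" using False less_Suc_eq by auto
    moreover have "tnorm_n T (Suc n) a \<le> tnorm_n T n a" using tn_basic[OF assms(1) h] by simp
    ultimately show ?thesis using IH by simp
  qed
qed

lemma arch_exists:
  assumes "archimedean_tnorm T" "g \<in> {0..<1}" "\<alpha> \<in> {0<..1}"
  shows "\<exists>m. tnorm_n T m (\<lambda>_. g) < \<alpha>"
proof -
  have t: "tnorm T" using assms(1) unfolding archimedean_tnorm_def continuous_tnorm_def by auto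
  have e1: "tnorm_n T 1 (\<lambda>_. g) = g"
    using t assms(2) unfolding tnorm_def by (simp add: numeral_eq_Suc) (metis atLeastAtMost_iff less_imp_le order_refl zero_le_one)
  show ?thesis
  proof (cases "g < \<alpha>")
    case True then show ?thesis using e1 by metis
  next
    case False
    then have "g \<in> {0<..<1}" "\<alpha> \<in> {0<..<1}" using assms by auto
    then show ?thesis using assms(1) unfolding archimedean_tnorm_def by blast
  qed
qed


lemma fi_qc:
  assumes "fuzzy_interval A" "u \<le> v" "v \<le> w"
  shows "min (A u) (A w) \<le> A v"
proof (cases "min (A u) (A w) \<le> 0")
  case True
  have "0 \<le> A v" using assms(1) unfolding fuzzy_interval_def by auto
  then show ?thesis using True by linarith
next
  case False
  let ?b = "min (A u) (A w)"
  have "?b \<in> {0<..1}" using False assms(1) unfolding fuzzy_interval_def by (auto simp: min_def)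
  then have "is_interval (alpha_cut A ?b)" using assms(1) unfolding fuzzy_interval_def by auto
  moreover have "u \<in> alpha_cut A ?b" "w \<in> alpha_cut A ?b" unfolding alpha_cut_def by auto
  ultimately have "v \<in> alpha_cut A ?b" using mem_is_interval_1_I assms(2,3) by blast
  then show ?thesis unfolding alpha_cut_def by auto
qed

lemma hypo_closed:
  assumes "fuzzy_interval A"
  shows "closed {p. snd p \<le> A (fst p)}"
  unfolding closed_sequential_limits
proof (intro allI impI, elim conjE)
  fix f :: "nat \<Rightarrow> real \<times> real" and l
  assume f: "\<forall>n. f n \<in> {p. snd p \<le> A (fst p)}" and lim: "f \<longlonglongrightarrow> l"
  show "l \<in> {p. snd p \<le> A (fst p)}"
  proof (rule ccontr)
    assume "l \<notin> {p. snd p \<le> A (fst p)}"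
    then have lt: "A (fst l) < snd l" by auto
    define g where "g = (A (fst l) + snd l) / 2"
    have g: "A (fst l) < g" "g < snd l" using lt unfolding g_def by auto
    have A01: "\<And>x. A x \<in> {0..1}" using assms unfolding fuzzy_interval_def by auto
    have "(\<lambda>n. snd (f n)) \<longlonglongrightarrow> snd l" using tendsto_snd[OF lim] .
    then have ev: "eventually (\<lambda>n. g < snd (f n)) sequentially" using order_tendstoD(1) g(2) by blast
    show False
    proof (cases "g \<le> 1")
      case False
      from ev obtain n where "g < snd (f n)" by (meson eventually_sequentially order_refl)
      moreover have "snd (f n) \<le> A (fst (f n))" using f by auto
      ultimately show False using A01[of "fst (f n)"] False by auto
    next
      case True
      have g0: "g \<in> {0<..1}" using g A01[of "fst l"] True by auto
      then have cl: "closed (alpha_cut A g)" using assms unfolding fuzzy_interval_def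
        using compact_imp_closed by blast
      have "eventually (\<lambda>n. fst (f n) \<in> alpha_cut A g) sequentially"
      proof -
        have fa: "\<And>n. snd (f n) \<le> A (fst (f n))" using f by auto
        show ?thesis using ev
        proof eventually_elim
          case (elim n)
          then show ?case using fa[of n] unfolding alpha_cut_def by auto
        qed
      qed
      then have "fst l \<in> alpha_cut A g" using Lim_in_closed_set[OF cl _ _ tendsto_fst[OF lim]] by auto
      then show False using g unfolding alpha_cut_def by auto
    qed
  qed
qed

fun Wset :: "(real \<Rightarrow> real \<Rightarrow> real) \<Rightarrow> (real \<times> real) set \<Rightarrow> nat \<Rightarrow> (real \<times> real) set" where
  "Wset T H 0 = {(0, 1)}"
| "Wset T H (Suc n) = (\<lambda>p. (fst (fst p) + fst (snd p), T (snd (fst p)) (snd (snd p)))) ` (Wset T H n \<times> H)"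

lemma W_char:
  "p \<in> Wset T H n \<longleftrightarrow> (\<exists>x b. (\<forall>j<n. (x j, b j) \<in> H) \<and> fst p = (\<Sum>j<n. x j) \<and> snd p = tnorm_n T n b)"
proof (induction n arbitrary: p)
  case 0 then show ?case by (cases p) auto
next
  case (Suc n)
  show ?case
  proof
    assume "p \<in> Wset T H (Suc n)"
    then obtain q h where q: "q \<in> Wset T H n" "h \<in> H" and p: "p = (fst q + fst h, T (snd q) (snd h))" by auto
    from q(1) Suc obtain x b where xb: "\<forall>j<n. (x j, b j) \<in> H" "fst q = (\<Sum>j<n. x j)" "snd q = tnorm_n T n b" by blast
    let ?x = "x(n := fst h)" and ?b = "b(n := snd h)"
    have "\<forall>j<Suc n. (?x j, ?b j) \<in> H" using xb(1) q(2) by (auto simp: less_Suc_eq)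
    moreover have "fst p = (\<Sum>j<Suc n. ?x j)" using xb(2) p by simp
    moreover have "tnorm_n T n ?b = tnorm_n T n b" by (rule tnn_cong) auto
    then have "snd p = tnorm_n T (Suc n) ?b" using xb(3) p by simp
    ultimately show "\<exists>x b. (\<forall>j<Suc n. (x j, b j) \<in> H) \<and> fst p = (\<Sum>j<Suc n. x j) \<and> snd p = tnorm_n T (Suc n) b" by blast
  next
    assume "\<exists>x b. (\<forall>j<Suc n. (x j, b j) \<in> H) \<and> fst p = (\<Sum>j<Suc n. x j) \<and> snd p = tnorm_n T (Suc n) b"
    then obtain x b where xb: "\<forall>j<Suc n. (x j, b j) \<in> H" "fst p = (\<Sum>j<Suc n. x j)" "snd p = tnorm_n T (Suc n) b" by blast
    let ?q = "((\<Sum>j<n. x j), tnorm_n T n b)"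
    have "?q \<in> Wset T H n" unfolding Suc.IH
      by (rule exI[of _ x], rule exI[of _ b]) (use xb(1) in auto)
    moreover have "(x n, b n) \<in> H" using xb(1) by auto
    moreover have "p = (fst ?q + fst (x n, b n), T (snd ?q) (snd (x n, b n)))" using xb by (cases p) auto
    ultimately show "p \<in> Wset T H (Suc n)"
      unfolding Wset.simps by (intro image_eqI[where x="(?q, (x n, b n))"]) auto
  qed
qed

lemma W_compact:
  assumes "continuous_tnorm T" "compact H" "H \<subseteq> UNIV \<times> {0..1}"
  shows "compact (Wset T H n) \<and> Wset T H n \<subseteq> UNIV \<times> {0..1}"
proof (induction n)
  case 0 then show ?case by auto
next
  case (Suc n)
  have t: "tnorm T" and ct: "continuous_on ({0..1} \<times> {0..1}) (\<lambda>(x, y). T x y)"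
    using assms(1) unfolding continuous_tnorm_def by auto
  let ?S = "Wset T H n \<times> H"
  have cS: "compact ?S" using Suc assms(2) compact_Times by blast
  have sub: "(\<lambda>p. (snd (fst p), snd (snd p))) ` ?S \<subseteq> {0..1} \<times> {0..1}" using Suc assms(3) by auto
  have c2: "continuous_on ?S (\<lambda>p. (\<lambda>(x, y). T x y) (snd (fst p), snd (snd p)))"
    by (rule continuous_on_compose2[OF ct _ sub]) (intro continuous_intros)
  have "continuous_on ?S (\<lambda>p. (fst (fst p) + fst (snd p), T (snd (fst p)) (snd (snd p))))"
    using c2 by (intro continuous_on_Pair) (auto intro!: continuous_intros)
  then have "compact (Wset T H (Suc n))" using compact_continuous_image[OF _ cS] by simp
  moreover have "Wset T H (Suc n) \<subseteq> UNIV \<times> {0..1}"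
  proof
    fix p assume "p \<in> Wset T H (Suc n)"
    then obtain q h where q: "q \<in> Wset T H n" "h \<in> H" and p: "p = (fst q + fst h, T (snd q) (snd h))" by auto
    have "snd q \<in> {0..1}" "snd h \<in> {0..1}" using q Suc assms(3) by auto
    then show "p \<in> UNIV \<times> {0..1}" using p tn_basic[OF t] by auto
  qed
  ultimately show ?case by blast
qed


lemma H_compact:
  assumes "fuzzy_interval A" "\<alpha> \<in> {0<..1}"
  shows "compact {p. snd p \<in> {\<alpha>/2..1} \<and> snd p \<le> A (fst p)}"
proof -
  have "\<alpha>/2 \<in> {0<..1}" using assms(2) by auto
  then have c: "compact (alpha_cut A (\<alpha>/2))" using assms(1) unfolding fuzzy_interval_def by auto
  have "{p. snd p \<in> {\<alpha>/2..1} \<and> snd p \<le> A (fst p)} = (alpha_cut A (\<alpha>/2) \<times> {\<alpha>/2..1}) \<inter> {p. snd p \<le> A (fst p)}"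
    unfolding alpha_cut_def by auto
  then show ?thesis using compact_Int_closed[OF compact_Times[OF c compact_Icc] hypo_closed[OF assms(1)]] by simp
qed

lemma S_facts:
  assumes "tnorm T" "fuzzy_interval A" "n \<ge> 1"
  shows "{tnorm_n T n (\<lambda>j. A (x j)) | x. (\<Sum>j<n. x j) / real n = z} \<noteq> {}"
    "bdd_above {tnorm_n T n (\<lambda>j. A (x j)) | x. (\<Sum>j<n. x j) / real n = z}"
proof -
  have "(\<Sum>j<n. (\<lambda>_. z) j) / real n = z" using assms(3) by simp
  then show "{tnorm_n T n (\<lambda>j. A (x j)) | x. (\<Sum>j<n. x j) / real n = z} \<noteq> {}" by blast
  have A01: "\<forall>j<n. A (x j) \<in> {0..1}" for x using assms(2) unfolding fuzzy_interval_def by auto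
  show "bdd_above {tnorm_n T n (\<lambda>j. A (x j)) | x. (\<Sum>j<n. x j) / real n = z}"
    unfolding bdd_above_def using tnn_range[OF assms(1) A01] by (intro exI[of _ 1]) auto
qed

lemma cut_W:
  assumes ct: "continuous_tnorm T" and fi: "fuzzy_interval A" and al: "\<alpha> \<in> {0<..1}" and n: "n \<ge> 1"
  defines "H \<equiv> {p. snd p \<in> {\<alpha>/2..1} \<and> snd p \<le> A (fst p)}"
  shows "z \<in> alpha_cut (ave_n T A n) \<alpha> \<longleftrightarrow> (\<exists>p\<in>Wset T H n. fst p = real n * z \<and> \<alpha> \<le> snd p)"
proof -
  have t: "tnorm T" using ct unfolding continuous_tnorm_def by auto
  have A01: "\<And>y. A y \<in> {0..1}" using fi unfolding fuzzy_interval_def by auto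
  let ?S = "{tnorm_n T n (\<lambda>j. A (x j)) | x. (\<Sum>j<n. x j) / real n = z}"
  have ne: "?S \<noteq> {}" and bdd: "bdd_above ?S" using S_facts[OF t fi n] by auto
  have Hsub: "H \<subseteq> UNIV \<times> {0..1}" unfolding H_def using al by auto
  have cH: "compact H" unfolding H_def using H_compact[OF fi al] .
  have cW: "compact (Wset T H n)" using W_compact[OF ct cH Hsub] by auto
  have nz: "real n \<noteq> 0" using n by auto
  have av: "ave_n T A n z = Sup ?S" unfolding ave_n_def by simp
  show ?thesis
  proof
    assume "z \<in> alpha_cut (ave_n T A n) \<alpha>"
    then have "\<alpha> \<le> ave_n T A n z" unfolding alpha_cut_def by simp
    then have sup: "\<alpha> \<le> Sup ?S" by (metis av)
    let ?G = "Wset T H n \<inter> ({real n * z} \<times> UNIV)"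
    have cG: "compact ?G" using compact_Int_closed[OF cW closed_Times[OF closed_singleton closed_UNIV]] .
    have key: "\<exists>p\<in>?G. t \<le> snd p" if tS: "t \<in> ?S" and tg: "\<alpha>/2 < t" for t
    proof -
      obtain x where x: "t = tnorm_n T n (\<lambda>j. A (x j))" "(\<Sum>j<n. x j) / real n = z" using tS by blast
      have "\<forall>j<n. (x j, A (x j)) \<in> H"
      proof (intro allI impI)
        fix j assume "j < n"
        then have "t \<le> A (x j)" using tnn_le[OF t _ \<open>j<n\<close>, of "\<lambda>j. A (x j)"] A01 x(1) by auto
        then show "(x j, A (x j)) \<in> H" unfolding H_def using tg A01[of "x j"] by auto
      qed
      then have "((\<Sum>j<n. x j), t) \<in> Wset T H n" unfolding W_char using x(1)
        by (intro exI[of _ x] exI[of _ "\<lambda>j. A (x j)"]) auto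
      moreover have "(\<Sum>j<n. x j) = real n * z" using x(2) nz by (simp add: field_simps)
      ultimately show ?thesis by (intro bexI[of _ "(real n * z, t)"]) auto
    qed
    show "\<exists>p\<in>Wset T H n. fst p = real n * z \<and> \<alpha> \<le> snd p"
    proof (cases "?G = {}")
      case True
      have "Sup ?S \<le> \<alpha>/2"
      proof (rule cSup_least[OF ne])
        fix t assume "t \<in> ?S"
        then show "t \<le> \<alpha>/2" using key True by force
      qed
      then show ?thesis using sup al by auto
    next
      case False
      obtain p0 where p0: "p0 \<in> ?G" "\<forall>q\<in>?G. snd q \<le> snd p0"
      proof -
        have "continuous_on ?G snd" by (intro continuous_intros)
        then show ?thesis using continuous_attains_sup[OF cG False, of snd] that by blast
      qed
      have "Sup ?S \<le> max (\<alpha>/2) (snd p0)"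
      proof (rule cSup_least[OF ne])
        fix t assume tS: "t \<in> ?S"
        show "t \<le> max (\<alpha>/2) (snd p0)"
        proof (cases "\<alpha>/2 < t")
          case True
          then obtain q where "q \<in> ?G" "t \<le> snd q" using key tS by blast
          then show ?thesis using p0 by force
        qed auto
      qed
      then have "\<alpha> \<le> snd p0" using sup al by auto
      then show ?thesis using p0(1) by (intro bexI[of _ p0]) auto
    qed
  next
    assume "\<exists>p\<in>Wset T H n. fst p = real n * z \<and> \<alpha> \<le> snd p"
    then obtain p where p: "p \<in> Wset T H n" "fst p = real n * z" "\<alpha> \<le> snd p" by blast
    then obtain x b where xb: "\<forall>j<n. (x j, b j) \<in> H" "fst p = (\<Sum>j<n. x j)" "snd p = tnorm_n T n b"
      unfolding W_char by blast
    have "tnorm_n T n b \<le> tnorm_n T n (\<lambda>j. A (x j))"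
      using xb(1) al A01 unfolding H_def by (intro tnn_mono[OF t]) auto
    moreover have "(\<Sum>j<n. x j) = real n * z" using xb(2) p(2) by auto
    then have "(\<Sum>j<n. x j) / real n = z" using nz by (simp add: field_simps)
    then have "tnorm_n T n (\<lambda>j. A (x j)) \<in> ?S" by blast
    ultimately have "\<alpha> \<le> Sup ?S" using cSup_upper[OF _ bdd] p(3) xb(3) by fastforce
    then have "\<alpha> \<le> ave_n T A n z" by (metis av)
    then show "z \<in> alpha_cut (ave_n T A n) \<alpha>" unfolding alpha_cut_def by simp
  qed
qed

lemma cut_char:
  assumes ct: "continuous_tnorm T" and fi: "fuzzy_interval A" and al: "\<alpha> \<in> {0<..1}" and n: "n \<ge> 1"
  shows "z \<in> alpha_cut (ave_n T A n) \<alpha> \<Longrightarrow> \<exists>x. (\<Sum>j<n. x j) = real n * z \<and> \<alpha> \<le> tnorm_n T n (\<lambda>j. A (x j))"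
proof -
  assume "z \<in> alpha_cut (ave_n T A n) \<alpha>"
  let ?H = "{p. snd p \<in> {\<alpha>/2..1} \<and> snd p \<le> A (fst p)}"
  have t: "tnorm T" using ct unfolding continuous_tnorm_def by auto
  have A01: "\<And>y. A y \<in> {0..1}" using fi unfolding fuzzy_interval_def by auto
  obtain p where p: "p \<in> Wset T ?H n" "fst p = real n * z" "\<alpha> \<le> snd p"
    using cut_W[OF ct fi al n] \<open>z \<in> _\<close> by blast
  then obtain x b where xb: "\<forall>j<n. (x j, b j) \<in> ?H" "fst p = (\<Sum>j<n. x j)" "snd p = tnorm_n T n b"
    unfolding W_char by blast
  have "tnorm_n T n b \<le> tnorm_n T n (\<lambda>j. A (x j))"
    using xb(1) al A01 by (intro tnn_mono[OF t]) auto
  then show ?thesis using xb p by (intro exI[of _ x]) auto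
qed

lemma cut_compact:
  assumes ct: "continuous_tnorm T" and fi: "fuzzy_interval A" and al: "\<alpha> \<in> {0<..1}" and n: "n \<ge> 1"
  shows "compact (alpha_cut (ave_n T A n) \<alpha>)"
proof -
  let ?H = "{p. snd p \<in> {\<alpha>/2..1} \<and> snd p \<le> A (fst p)}"
  have Hsub: "?H \<subseteq> UNIV \<times> {0..1}" using al by auto
  have cW: "compact (Wset T ?H n)" using W_compact[OF ct H_compact[OF fi al] Hsub] by auto
  have cl: "closed {p :: real \<times> real. \<alpha> \<le> snd p}" by (intro closed_Collect_le continuous_intros)
  have c2: "compact (Wset T ?H n \<inter> {p. \<alpha> \<le> snd p})" using compact_Int_closed[OF cW cl] .
  have eq: "alpha_cut (ave_n T A n) \<alpha> = (\<lambda>p. fst p / real n) ` (Wset T ?H n \<inter> {p. \<alpha> \<le> snd p})"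
  proof (intro set_eqI iffI)
    fix z assume "z \<in> alpha_cut (ave_n T A n) \<alpha>"
    then obtain p where p: "p \<in> Wset T ?H n" "fst p = real n * z" "\<alpha> \<le> snd p"
      using cut_W[OF ct fi al n] by blast
    then show "z \<in> (\<lambda>p. fst p / real n) ` (Wset T ?H n \<inter> {p. \<alpha> \<le> snd p})"
      using n by (intro image_eqI[where x=p]) auto
  next
    fix z assume "z \<in> (\<lambda>p. fst p / real n) ` (Wset T ?H n \<inter> {p. \<alpha> \<le> snd p})"
    then obtain p where p: "p \<in> Wset T ?H n" "\<alpha> \<le> snd p" "z = fst p / real n" by auto
    then have "fst p = real n * z" using n by auto
    then show "z \<in> alpha_cut (ave_n T A n) \<alpha>" using cut_W[OF ct fi al n] p by blast
  qed
  show ?thesis unfolding eq by (rule compact_continuous_image[OF _ c2]) (use n in \<open>auto intro!: continuous_intros\<close>)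
qed


lemma one_side:
  assumes arch: "archimedean_tnorm T" and A01: "\<And>x. A x \<in> {0..1}"
    and mono: "\<And>x y. b \<le> y \<Longrightarrow> y \<le> x \<Longrightarrow> A x \<le> A y"
    and g1: "A (b + e/2) < 1" and e: "e > 0" and al: "\<alpha> \<in> {0<..1}"
    and R: "\<And>x. \<alpha> \<le> A x \<Longrightarrow> x \<le> R"
  shows "\<exists>N. \<forall>n\<ge>N. \<forall>x. real n * (b + e) \<le> (\<Sum>j<n. x j) \<longrightarrow> tnorm_n T n (\<lambda>j. A (x j)) < \<alpha>"
proof -
  have t: "tnorm T" using arch unfolding archimedean_tnorm_def continuous_tnorm_def by auto
  define c where "c = b + e/2"
  define g where "g = A c"
  have g: "g \<in> {0..<1}" using g1 A01[of c] unfolding g_def c_def by auto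
  obtain m where m: "tnorm_n T m (\<lambda>_. g) < \<alpha>" using arch_exists[OF arch g al] by blast
  define D where "D = \<bar>R - c\<bar> + 1"
  have D: "D > 0" unfolding D_def by auto
  define N where "N = nat (ceiling (2 * real m * D / e))"
  have N: "2 * real m * D / e \<le> real N" unfolding N_def by linarith
  show ?thesis
  proof (intro exI[of _ N] allI impI)
    fix n x assume nN: "N \<le> n" and sx: "real n * (b + e) \<le> (\<Sum>j<n. x j)"
    show "tnorm_n T n (\<lambda>j. A (x j)) < \<alpha>"
    proof (rule ccontr)
      assume "\<not> tnorm_n T n (\<lambda>j. A (x j)) < \<alpha>"
      then have ge: "\<alpha> \<le> tnorm_n T n (\<lambda>j. A (x j))" by simp
      have Ax: "\<forall>j<n. A (x j) \<in> {0..1}" using A01 by auto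
      have xR: "x j \<le> R" if "j < n" for j
        using ge tnn_le[OF t Ax that] R by force
      define K where "K = {j \<in> {..<n}. c < x j}"
      have "(\<Sum>j<n. x j) \<le> (\<Sum>j<n. c + (if c < x j then R - c else 0))"
        by (rule sum_mono) (use xR in auto)
      also have "\<dots> = real n * c + (\<Sum>j<n. if c < x j then R - c else 0)"
        by (simp add: sum.distrib)
      also have "(\<Sum>j<n. if c < x j then R - c else 0) = real (card K) * (R - c)"
        unfolding K_def by (simp add: sum.inter_filter[symmetric])
      finally have "real n * (b + e) \<le> real n * c + real (card K) * (R - c)" using sx by linarith
      then have "real n * (e/2) \<le> real (card K) * (R - c)" unfolding c_def by (simp add: algebra_simps)
      also have "\<dots> \<le> real (card K) * D" unfolding D_def by (intro mult_left_mono) auto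
      finally have kD: "real n * (e/2) \<le> real (card K) * D" .
      have "m \<le> card K"
      proof (rule ccontr)
        assume "\<not> m \<le> card K"
        then have "real (card K) + 1 \<le> real m" by simp
        then have "real (card K) * D + D \<le> real m * D" using D by (metis distrib_right mult_1 mult_right_mono less_imp_le)
        moreover have "real m * D \<le> real n * (e/2)"
        proof -
          have "2 * real m * D / e \<le> real n" using N nN by linarith
          then show ?thesis using e by (simp add: field_simps)
        qed
        ultimately show False using kD D by linarith
      qed
      moreover have "K \<subseteq> {j. j < n \<and> A (x j) \<le> g}"
        unfolding K_def g_def using mono e unfolding c_def by auto
      then have "card K \<le> card {j. j < n \<and> A (x j) \<le> g}" by (intro card_mono) auto
      ultimately have "tnorm_n T (card {j. j < n \<and> A (x j) \<le> g}) (\<lambda>_. g) \<le> tnorm_n T m (\<lambda>_. g)"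
        using tnn_const_dec[OF t] g by auto
      then have "tnorm_n T n (\<lambda>j. A (x j)) < \<alpha>" using tnn_count[OF t Ax, of g] g m by auto
      then show False using ge by simp
    qed
  qed
qed


lemma core_in_cut:
  assumes t: "tnorm T" and fi: "fuzzy_interval A" and al: "\<alpha> \<in> {0<..1}" and n: "n \<ge> 1"
    and z: "A z = 1"
  shows "z \<in> alpha_cut (ave_n T A n) \<alpha>"
proof -
  let ?S = "{tnorm_n T n (\<lambda>j. A (x j)) | x. (\<Sum>j<n. x j) / real n = z}"
  have bdd: "bdd_above ?S" using S_facts[OF t fi n] by auto
  have "(\<Sum>j<n. (\<lambda>_. z) j) / real n = z" using n by simp
  then have "tnorm_n T n (\<lambda>j. A ((\<lambda>_. z) j)) \<in> ?S"
    by (intro CollectI exI[of _ "\<lambda>_. z"]) simp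
  moreover have "tnorm_n T n (\<lambda>j. A ((\<lambda>_. z) j)) = 1"
    using tnn_cong[of n "\<lambda>j. A z" "\<lambda>_. 1" T] z tnn_one[OF t] by simp
  ultimately have "1 \<le> Sup ?S" using cSup_upper[OF _ bdd] by fastforce
  then have "1 \<le> ave_n T A n z" unfolding ave_n_def by simp
  then show ?thesis using al unfolding alpha_cut_def by auto
qed

theorem mainTheorem9:
  fixes T :: "real \<Rightarrow> real \<Rightarrow> real" and A :: "real \<Rightarrow> real"
  assumes "archimedean_tnorm T"
    and "fuzzy_interval A"
  shows "\<forall>\<alpha>\<in>{0<..1}.
           (\<forall>n\<ge>1. alpha_cut (ave_n T A n) \<alpha> \<noteq> {} \<and> compact (alpha_cut (ave_n T A n) \<alpha>)) \<and>
           (\<lambda>n. hausdorff_dist (alpha_cut (ave_n T A (Suc n)) \<alpha>) (core A)) \<longlonglongrightarrow> 0"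
proof
  fix \<alpha> :: real assume al: "\<alpha> \<in> {0<..1}"
  note arch = assms(1) and fi = assms(2)
  have ct: "continuous_tnorm T" using arch unfolding archimedean_tnorm_def by auto
  have t: "tnorm T" using ct unfolding continuous_tnorm_def by auto
  have A01: "\<And>x. A x \<in> {0..1}" using fi unfolding fuzzy_interval_def by auto
  have "(1::real) \<in> {0<..1}" by auto
  then have cc: "core A \<noteq> {}" "compact (core A)" "is_interval (core A)"
    using fi unfolding fuzzy_interval_def core_def by auto
  obtain a where a: "a \<in> core A" "\<forall>y\<in>core A. a \<le> y" using compact_attains_inf[OF cc(2,1)] by blast
  obtain b where b: "b \<in> core A" "\<forall>y\<in>core A. y \<le> b" using compact_attains_sup[OF cc(2,1)] by blast
  have coreeq: "core A = {a..b}"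
  proof
    show "core A \<subseteq> {a..b}" using a b by auto
    show "{a..b} \<subseteq> core A" using mem_is_interval_1_I[OF cc(3) a(1) b(1)] by auto
  qed
  have core1: "z \<in> core A \<longleftrightarrow> A z = 1" for z
    using A01[of z] unfolding core_def alpha_cut_def by auto
  have Aa: "A a = 1" and Ab: "A b = 1" using a(1) b(1) core1 by auto
  have sub: "core A \<subseteq> alpha_cut (ave_n T A n) \<alpha>" if "n \<ge> 1" for n
    using core_in_cut[OF t fi al that] core1 by auto
  show "(\<forall>n\<ge>1. alpha_cut (ave_n T A n) \<alpha> \<noteq> {} \<and> compact (alpha_cut (ave_n T A n) \<alpha>)) \<and>
           (\<lambda>n. hausdorff_dist (alpha_cut (ave_n T A (Suc n)) \<alpha>) (core A)) \<longlonglongrightarrow> 0"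
  proof (intro conjI allI impI)
    fix n :: nat assume n: "n \<ge> 1"
    show "alpha_cut (ave_n T A n) \<alpha> \<noteq> {}" using sub[OF n] cc(1) by auto
    show "compact (alpha_cut (ave_n T A n) \<alpha>)" using cut_compact[OF ct fi al n] .
  next
    have "compact (alpha_cut A \<alpha>)" using fi al unfolding fuzzy_interval_def by auto
    then obtain R where R: "\<forall>x\<in>alpha_cut A \<alpha>. \<bar>x\<bar> \<le> R"
      using compact_imp_bounded bounded_real by blast
    have R1: "\<And>x. \<alpha> \<le> A x \<Longrightarrow> x \<le> R" and R2: "\<And>x. \<alpha> \<le> A (- x) \<Longrightarrow> x \<le> R"
      using R unfolding alpha_cut_def by force+
    show "(\<lambda>n. hausdorff_dist (alpha_cut (ave_n T A (Suc n)) \<alpha>) (core A)) \<longlonglongrightarrow> 0"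
    proof (rule LIMSEQ_I)
      fix r :: real assume r: "0 < r"
      define e where "e = r / 2"
      have e: "e > 0" "e < r" using r unfolding e_def by auto
      have mono1: "A x \<le> A y" if "b \<le> y" "y \<le> x" for x y
        using fi_qc[OF fi that] Ab A01[of x] by auto
      have g1: "A (b + e/2) < 1"
      proof -
        have "b + e/2 \<notin> core A" using coreeq e by auto
        then show ?thesis using core1 A01[of "b + e/2"] by force
      qed
      obtain N1 where N1: "\<forall>n\<ge>N1. \<forall>x. real n * (b + e) \<le> (\<Sum>j<n. x j) \<longrightarrow> tnorm_n T n (\<lambda>j. A (x j)) < \<alpha>"
        using one_side[of T A b e \<alpha> R, OF arch A01 mono1 g1 e(1) al R1] by blast
      have mono2: "A (- x) \<le> A (- y)" if "- a \<le> y" "y \<le> x" for x y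
        using fi_qc[OF fi, of "- x" "- y" a] that Aa A01[of "-x"] by auto
      have g2: "A (- (- a + e/2)) < 1"
      proof -
        have "- (- a + e/2) \<notin> core A" using coreeq e by auto
        then show ?thesis using core1 A01[of "- (- a + e/2)"] by force
      qed
      obtain N2 where N2: "\<forall>n\<ge>N2. \<forall>x. real n * (- a + e) \<le> (\<Sum>j<n. x j) \<longrightarrow> tnorm_n T n (\<lambda>j. A (- x j)) < \<alpha>"
        using one_side[of T "\<lambda>x. A (- x)" "- a" e \<alpha> R, OF arch A01 mono2 g2 e(1) al R2] by blast
      show "\<exists>no. \<forall>n\<ge>no. norm (hausdorff_dist (alpha_cut (ave_n T A (Suc n)) \<alpha>) (core A) - 0) < r"
      proof (intro exI[of _ "max N1 N2"] allI impI)
        fix n assume nN: "max N1 N2 \<le> n"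
        let ?C = "alpha_cut (ave_n T A (Suc n)) \<alpha>"
        have sC: "core A \<subseteq> ?C" using sub[of "Suc n"] by auto
        have Cne: "?C \<noteq> {}" using sC cc(1) by auto
        have inab: "z \<in> {a - e..b + e}" if zC0: "z \<in> ?C" for z
        proof -
          obtain x where x: "(\<Sum>j<Suc n. x j) = real (Suc n) * z" "\<alpha> \<le> tnorm_n T (Suc n) (\<lambda>j. A (x j))"
            using cut_char[of T A \<alpha> "Suc n" z, OF ct fi al _ zC0] by auto
          have "\<not> b + e < z"
          proof
            assume "b + e < z"
            then have "real (Suc n) * (b + e) \<le> (\<Sum>j<Suc n. x j)" using x(1)
              by (simp add: mult_left_mono)
            moreover have "Suc n \<ge> N1" using nN by auto
            ultimately have "tnorm_n T (Suc n) (\<lambda>j. A (x j)) < \<alpha>" using N1 by blast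
            then show False using x(2) by simp
          qed
          moreover have "\<not> z < a - e"
          proof
            assume "z < a - e"
            then have "real (Suc n) * (- a + e) \<le> real (Suc n) * (- z)"
              by (intro mult_left_mono) auto
            also have "\<dots> = (\<Sum>j<Suc n. - x j)" using x(1) by (simp add: sum_negf)
            finally have "real (Suc n) * (- a + e) \<le> (\<Sum>j<Suc n. - x j)" .
            moreover have "Suc n \<ge> N2" using nN by auto
            ultimately have "tnorm_n T (Suc n) (\<lambda>j. A (- (\<lambda>j. - x j) j)) < \<alpha>" using N2 by blast
            then show False using x(2) by simp
          qed
          ultimately show ?thesis by auto
        qed
        have h1: "(SUP x\<in>?C. infdist x (core A)) \<le> e"
        proof (rule cSUP_least[OF Cne])
          fix z assume zC: "z \<in> ?C"
          show "infdist z (core A) \<le> e"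
          proof (cases "z \<in> core A")
            case True then show ?thesis using e by simp
          next
            case False
            then have "z < a \<or> b < z" using coreeq by auto
            then show ?thesis
            proof
              assume "z < a"
              then show ?thesis using infdist_le[OF a(1), of z] inab[OF zC] by (auto simp: dist_real_def)
            next
              assume "b < z"
              then show ?thesis using infdist_le[OF b(1), of z] inab[OF zC] by (auto simp: dist_real_def)
            qed
          qed
        qed
        have h2: "(SUP y\<in>core A. infdist y ?C) = 0"
        proof -
          have "(SUP y\<in>core A. infdist y ?C) = (SUP y\<in>core A. 0::real)"
            using sC by (intro SUP_cong) auto
          then show ?thesis using cc(1) by simp
        qed
        have "hausdorff_dist ?C (core A) = max (SUP x\<in>?C. infdist x (core A)) 0"
          unfolding hausdorff_dist_def h2 ..
        then show "norm (hausdorff_dist ?C (core A) - 0) < r" using h1 e by auto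
      qed
    qed
  qed
qed

end
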